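(* Let $T$ be a binary phylogenetic tree with $n$ leaves. Then $\Phi(T)$ is minimum among all binary phylogenetic trees with $n$ leaves if and only if $T$ is maximally balanced.
   Context: A phylogenetic tree with $n$ leaves is a rooted tree whose leaves are bijectively labeled by $\{1,\dots,n\}$; binary means every internal node has exactly two children. $\kappa_T(v)$ is the number of leaves descending from node $v$. An internal node $v$ with children $v_1,v_2$ is balanced if $|\kappa_T(v_1)-\kappa_T(v_2)|\le 1$; $T$ is maximally balanced if all its internal nodes are balanced. The depth $\delta_T(v)$ is the number of arcs from the root to $v$; for leaves $i,j$, $\varphi_T(i,j)=\delta_T(LCA_T(i,j))$ ($LCA$ = lowest common ancestor), and $\Phi(T)=\sum_{1\le i<j\le n}\varphi_T(i,j)$. *)

theory Defs
  imports Main
begin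

text \<open>Rooted binary trees with labelled leaves. A node has exactly two children;
  the order of the children is irrelevant to all notions below.\<close>
datatype btree = Leaf nat | Node btree btree

fun leaves :: "btree \<Rightarrow> nat list" where
  "leaves (Leaf i) = [i]"
| "leaves (Node l r) = leaves l @ leaves r"

definition kappa :: "btree \<Rightarrow> nat" where
  "kappa t = length (leaves t)"

definition is_phylo :: "nat \<Rightarrow> btree \<Rightarrow> bool" where
  "is_phylo n t \<longleftrightarrow> distinct (leaves t) \<and> set (leaves t) = {1..n}"

fun max_balanced :: "btree \<Rightarrow> bool" where
  "max_balanced (Leaf i) = True"
| "max_balanced (Node l r) =
     ((if kappa l \<le> kappa r then kappa r - kappa l else kappa l - kappa r) \<le> 1
      \<and> max_balanced l \<and> max_balanced r)"

fun lca_depth :: "btree \<Rightarrow> nat \<Rightarrow> nat \<Rightarrow> nat" where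
  "lca_depth (Leaf k) i j = 0"
| "lca_depth (Node l r) i j =
     (if i \<in> set (leaves l) \<and> j \<in> set (leaves l) then 1 + lca_depth l i j
      else if i \<in> set (leaves r) \<and> j \<in> set (leaves r) then 1 + lca_depth r i j
      else 0)"

definition Phi :: "nat \<Rightarrow> btree \<Rightarrow> nat" where
  "Phi n t = (\<Sum>(i,j) \<in> {(i,j). 1 \<le> i \<and> i < j \<and> j \<le> n}. lca_depth t i j)"

end

theory Submission
  imports Defs
begin

fun phi :: "btree \<Rightarrow> nat" where
  "phi (Leaf i) = 0"
| "phi (Node l r) = phi l + phi r + (kappa l choose 2) + (kappa r choose 2)"

function f :: "nat \<Rightarrow> nat" where
  "f k = (if k \<le> 1 then 0 else f (k - k div 2) + f (k div 2)
          + ((k - k div 2) choose 2) + ((k div 2) choose 2))"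
  by auto
termination by (relation "measure id") auto

declare f.simps[simp del]

function D :: "nat \<Rightarrow> nat" where
  "D k = (if k \<le> 1 then 0 else D (k div 2) + k div 2)"
  by auto
termination by (relation "measure id") auto

declare D.simps[simp del]

function bal :: "nat \<Rightarrow> nat \<Rightarrow> btree" where
  "bal lo k = (if k \<le> 1 then Leaf lo
     else Node (bal lo (k - k div 2)) (bal (lo + (k - k div 2)) (k div 2)))"
  by auto
termination by (relation "measure (\<lambda>(lo,k). k)") auto

declare bal.simps[simp del]

definition h :: "nat \<Rightarrow> nat \<Rightarrow> nat" where
  "h a b = f a + f b + (a choose 2) + (b choose 2)"

lemma C_Suc: "(Suc a choose 2) = (a choose 2) + a"
  by (simp add: numeral_2_eq_2)

lemma f1: "f (Suc 0) = 0" by (subst f.simps) simp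

lemma f_rec: "2 \<le> k \<Longrightarrow> f k = h (k - k div 2) (k div 2)"
  by (subst f.simps) (simp add: h_def)

lemma fD: "1 \<le> k \<Longrightarrow> f (Suc k) = f k + D k"
proof (induction k rule: less_induct)
  case (less k)
  show ?case
  proof (cases "k = 1")
    case True
    then show ?thesis
      by (simp add: f_rec h_def f1 D.simps)
  next
    case False
    then have k2: "k \<ge> 2" using less.prems by auto
    have "k = 2*(k div 2) \<or> k = 2*(k div 2)+1" by auto
    then obtain m where m: "k = 2*m \<or> k = 2*m+1" by blast
    have m1: "m \<ge> 1" using m k2 by auto
    have IH: "f (Suc m) = f m + D m" using less.IH[of m] m m1 by auto
    from m show ?thesis
    proof
      assume e: "k = 2*m"
      have "f k = h m m" using f_rec[OF k2] e by simp
      moreover have "f (Suc k) = h (Suc m) m" using f_rec[of "Suc k"] k2 e by simp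
      moreover have "D k = D m + m" using e k2 by (subst D.simps) simp
      ultimately show ?thesis using IH by (simp add: h_def C_Suc)
    next
      assume e: "k = 2*m+1"
      have "f k = h (Suc m) m" using f_rec[OF k2] e by simp
      moreover have "f (Suc k) = h (Suc m) (Suc m)" using f_rec[of "Suc k"] k2 e by simp
      moreover have "D k = D m + m" using e k2 by (subst D.simps) simp
      ultimately show ?thesis using IH by (simp add: h_def C_Suc)
    qed
  qed
qed

lemma D_Suc: "D k \<le> D (Suc k)"
proof (induction k rule: less_induct)
  case (less k)
  show ?case
  proof (cases "k \<le> 1")
    case True
    then show ?thesis by (subst (2) D.simps) (auto simp: D.simps)
  next
    case False
    have a: "D k = D (k div 2) + k div 2" using False by (subst D.simps) simp
    have b: "D (Suc k) = D (Suc k div 2) + Suc k div 2" using False by (subst D.simps) simp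
    have "Suc k div 2 = k div 2 \<or> Suc k div 2 = Suc (k div 2)" by auto
    moreover have "D (k div 2) \<le> D (Suc (k div 2))" using less.IH[of "k div 2"] False by auto
    ultimately show ?thesis using a b by auto
  qed
qed

lemma D_mono: "a \<le> b \<Longrightarrow> D a \<le> D b"
  using lift_Suc_mono_le[of D, OF D_Suc] by blast

lemma h_sym: "h a b = h b a" by (simp add: h_def)

lemma key_aux:
  "\<forall>a b. 1 \<le> b \<longrightarrow> b \<le> a \<longrightarrow> a - b = d \<longrightarrow>
     f (a+b) \<le> h a b \<and> (f (a+b) = h a b \<longleftrightarrow> a - b \<le> 1)"
proof (induction d rule: less_induct)
  case (less d)
  show ?case
  proof (intro allI impI)
    fix a b assume b1: "1 \<le> b" and ba: "b \<le> a" and d: "a - b = d"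
    show "f (a+b) \<le> h a b \<and> (f (a+b) = h a b \<longleftrightarrow> a - b \<le> 1)"
    proof (cases "d \<le> 1")
      case True
      then have "a = b \<or> a = Suc b" using d ba by auto
      then have "(a+b) div 2 = b \<and> (a+b) - (a+b) div 2 = a" by auto
      then have "f (a+b) = h a b" using f_rec[of "a+b"] b1 ba by simp
      then show ?thesis using True d by simp
    next
      case False
      define a' where "a' = a - 1"
      have a': "a = Suc a'" using False d a'_def by auto
      have H: "\<forall>a b. 1 \<le> b \<longrightarrow> b \<le> a \<longrightarrow> a - b = d - 2 \<longrightarrow>
         f (a+b) \<le> h a b \<and> (f (a+b) = h a b \<longleftrightarrow> a - b \<le> 1)"
        using less.IH[of "d - 2"] False by auto
      have IH: "f (a'+Suc b) \<le> h a' (Suc b)"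
        using H[rule_format, of "Suc b" a'] False d b1 a' by auto
      have "f a = f a' + D a'" using fD[of a'] a' ba b1 False d by simp
      moreover have "f (Suc b) = f b + D b" using fD[of b] b1 by simp
      moreover have "D b \<le> D a'" using D_mono[of b a'] False d a' by auto
      moreover have "b < a'" using False d a' by auto
      ultimately have "h a' (Suc b) < h a b" using a' by (simp add: h_def C_Suc)
      then have "f (a+b) < h a b" using IH a' by simp
      then show ?thesis using False d by simp
    qed
  qed
qed

lemma key: "1 \<le> a \<Longrightarrow> 1 \<le> b \<Longrightarrow>
   f (a+b) \<le> h a b \<and> (f (a+b) = h a b \<longleftrightarrow>
     (if a \<le> b then b - a else a - b) \<le> 1)"
proof (cases "b \<le> a")
  case True
  assume "1 \<le> a" "1 \<le> b"
  then show ?thesis using key_aux[of "a-b"] True by auto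
next
  case False
  assume "1 \<le> a" "1 \<le> b"
  have "f (b+a) \<le> h b a \<and> (f (b+a) = h b a \<longleftrightarrow> b - a \<le> 1)"
    using key_aux[of "b-a"] False \<open>1 \<le> a\<close> by auto
  then show ?thesis using False h_sym[of a b] by (simp add: add.commute)
qed

lemma kappa_Leaf[simp]: "kappa (Leaf i) = 1" by (simp add: kappa_def)
lemma kappa_Node[simp]: "kappa (Node l r) = kappa l + kappa r" by (simp add: kappa_def)
lemma kappa_pos: "1 \<le> kappa t" by (induction t) auto

lemma phi_lower: "f (kappa t) \<le> phi t \<and> (phi t = f (kappa t) \<longleftrightarrow> max_balanced t)"
proof (induction t)
  case (Leaf i)
  then show ?case by (simp add: f1)
next
  case (Node l r)
  have K: "f (kappa l + kappa r) \<le> h (kappa l) (kappa r) \<and>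
    (f (kappa l + kappa r) = h (kappa l) (kappa r) \<longleftrightarrow>
     (if kappa l \<le> kappa r then kappa r - kappa l else kappa l - kappa r) \<le> 1)"
    using key kappa_pos by blast
  have "phi (Node l r) = phi l + phi r + (kappa l choose 2) + (kappa r choose 2)" by simp
  then show ?case using K Node.IH by (auto simp: h_def)
qed

lemma bal_leaves: "1 \<le> k \<Longrightarrow> leaves (bal lo k) = [lo..<lo+k]"
proof (induction lo k rule: bal.induct)
  case (1 lo k)
  show ?case
  proof (cases "k \<le> 1")
    case True then have "k = 1" using 1 by simp
    then show ?thesis by (simp add: bal.simps)
  next
    case False
    then have "leaves (bal lo k) = [lo..<lo + (k - k div 2)] @ [lo + (k - k div 2)..<lo + (k - k div 2) + k div 2]"
      using 1 by (subst bal.simps) simp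
    also have "\<dots> = [lo..<lo+k]" using False
      by (metis add.assoc le_add1 le_add_diff_inverse2 div_le_dividend upt_add_eq_append)
    finally show ?thesis .
  qed
qed

lemma bal_kappa: "1 \<le> k \<Longrightarrow> kappa (bal lo k) = k"
  by (simp add: kappa_def bal_leaves)

lemma bal_mb: "1 \<le> k \<Longrightarrow> max_balanced (bal lo k)"
proof (induction lo k rule: bal.induct)
  case (1 lo k)
  show ?case
  proof (cases "k \<le> 1")
    case True then show ?thesis by (simp add: bal.simps)
  next
    case False
    have a: "1 \<le> k - k div 2" "1 \<le> k div 2" "k div 2 \<le> k - k div 2"
      "k - k div 2 \<le> k div 2 + 1" using False by auto
    have b: "k - (k div 2 + k div 2) \<le> 1" by presburger
    show ?thesis using False 1 a b by (subst bal.simps) (simp add: bal_kappa)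
  qed
qed

definition pairs :: "nat set \<Rightarrow> (nat \<times> nat) set" where
  "pairs S = {(i,j). i < j \<and> i \<in> S \<and> j \<in> S}"

lemma pairs_finite: "finite S \<Longrightarrow> finite (pairs S)"
  by (rule finite_subset[of _ "S \<times> S"]) (auto simp: pairs_def)

lemma card_pairs: "finite S \<Longrightarrow> card (pairs S) = card S choose 2"
proof -
  assume fS: "finite S"
  have inj: "inj_on (\<lambda>(i,j). {i,j}) (pairs S)"
    by (auto simp: inj_on_def pairs_def doubleton_eq_iff)
  have img: "(\<lambda>(i,j). {i,j}) ` pairs S = {B. B \<subseteq> S \<and> card B = 2}"
  proof
    show "(\<lambda>(i,j). {i,j}) ` pairs S \<subseteq> {B. B \<subseteq> S \<and> card B = 2}"
      by (auto simp: pairs_def)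
  next
    show "{B. B \<subseteq> S \<and> card B = 2} \<subseteq> (\<lambda>(i,j). {i,j}) ` pairs S"
    proof
      fix B assume "B \<in> {B. B \<subseteq> S \<and> card B = 2}"
      then obtain x y where B: "B = {x,y}" "x \<noteq> y" "x \<in> S" "y \<in> S"
        by (auto simp: card_2_iff)
      show "B \<in> (\<lambda>(i,j). {i,j}) ` pairs S"
      proof (cases "x < y")
        case True
        then show ?thesis using B by (auto simp: pairs_def image_iff intro!: bexI[of _ "(x,y)"])
      next
        case False
        then have "y < x" using B by auto
        then show ?thesis using B by (auto simp: pairs_def image_iff insert_commute intro!: bexI[of _ "(y,x)"])
      qed
    qed
  qed
  have "card (pairs S) = card {B. B \<subseteq> S \<and> card B = 2}"
    using card_image[OF inj] img by simp
  also have "\<dots> = card S choose 2" using n_subsets[OF fS] by simp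
  finally show ?thesis .
qed

lemma Phi_phi: "distinct (leaves t) \<Longrightarrow>
  (\<Sum>(i,j) \<in> pairs (set (leaves t)). lca_depth t i j) = phi t"
proof (induction t)
  case (Leaf x)
  then show ?case by simp
next
  case (Node l r)
  define L where "L = set (leaves l)"
  define R where "R = set (leaves r)"
  have dl: "distinct (leaves l)" and dr: "distinct (leaves r)" and LR: "L \<inter> R = {}"
    using Node.prems by (auto simp: L_def R_def)
  let ?g = "\<lambda>(i,j). lca_depth (Node l r) i j"
  let ?S = "pairs (L \<union> R)"
  have fin: "finite ?S" by (rule pairs_finite) (simp add: L_def R_def)
  have sub: "pairs L \<union> pairs R \<subseteq> ?S" by (auto simp: pairs_def)
  have s1: "sum ?g ?S = sum ?g (?S - (pairs L \<union> pairs R)) + sum ?g (pairs L \<union> pairs R)"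
    using sum.subset_diff[OF sub fin] .
  have s0: "sum ?g (?S - (pairs L \<union> pairs R)) = 0"
    by (rule sum.neutral) (use LR in \<open>auto simp: pairs_def L_def R_def\<close>)
  have disj: "pairs L \<inter> pairs R = {}" using LR by (auto simp: pairs_def)
  have fL: "finite (pairs L)" and fR: "finite (pairs R)"
    by (auto intro: pairs_finite simp: L_def R_def)
  have s2: "sum ?g (pairs L \<union> pairs R) = sum ?g (pairs L) + sum ?g (pairs R)"
    using sum.union_disjoint[OF fL fR disj] .
  have gL: "sum ?g (pairs L) = sum (\<lambda>p. 1 + (case p of (i,j) \<Rightarrow> lca_depth l i j)) (pairs L)"
    by (rule sum.cong) (auto simp: pairs_def L_def)
  have gR: "sum ?g (pairs R) = sum (\<lambda>p. 1 + (case p of (i,j) \<Rightarrow> lca_depth r i j)) (pairs R)"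
    by (rule sum.cong) (use LR in \<open>auto simp: pairs_def L_def R_def\<close>)
  have cL: "card (pairs L) = kappa l choose 2"
    using card_pairs[of L] dl by (simp add: L_def kappa_def distinct_card)
  have cR: "card (pairs R) = kappa r choose 2"
    using card_pairs[of R] dr by (simp add: R_def kappa_def distinct_card)
  have hL: "sum (\<lambda>p. 1 + (case p of (i,j) \<Rightarrow> lca_depth l i j)) (pairs L) = card (pairs L) + phi l"
    using Node.IH(1) dl by (subst sum.distrib) (simp add: L_def)
  have hR: "sum (\<lambda>p. 1 + (case p of (i,j) \<Rightarrow> lca_depth r i j)) (pairs R) = card (pairs R) + phi r"
    using Node.IH(2) dr by (subst sum.distrib) (simp add: R_def)
  have "sum ?g ?S = (kappa l choose 2) + phi l + ((kappa r choose 2) + phi r)"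
    using s1 s0 s2 gL gR cL cR hL hR by simp
  then show ?case by (simp add: L_def R_def)
qed

lemma Phi_eq: "is_phylo n t \<Longrightarrow> Phi n t = phi t \<and> kappa t = n"
proof -
  assume p: "is_phylo n t"
  have "{(i,j). 1 \<le> i \<and> i < j \<and> j \<le> n} = pairs (set (leaves t))"
    using p by (auto simp: is_phylo_def pairs_def)
  then have "Phi n t = (\<Sum>(i,j) \<in> pairs (set (leaves t)). lca_depth t i j)"
    by (simp add: Phi_def)
  also have "\<dots> = phi t" using Phi_phi p unfolding is_phylo_def by blast
  finally show ?thesis using p
    by (metis card_atLeastAtMost diff_Suc_1 distinct_card is_phylo_def kappa_def)
qed

theorem mainTheorem10:
  fixes n :: nat and T :: btree
  assumes "is_phylo n T"
  shows "(\<forall>T'. is_phylo n T' \<longrightarrow> Phi n T \<le> Phi n T') \<longleftrightarrow> max_balanced T"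
proof
  have E: "Phi n T = phi T" "kappa T = n" using Phi_eq assms by auto
  have n1: "1 \<le> n" using E(2) kappa_pos by metis
  {
    assume A: "\<forall>T'. is_phylo n T' \<longrightarrow> Phi n T \<le> Phi n T'"
    have pb: "is_phylo n (bal 1 n)"
      using n1 by (auto simp: is_phylo_def bal_leaves)
    have "Phi n (bal 1 n) = f n"
      using Phi_eq[OF pb] phi_lower[of "bal 1 n"] bal_mb n1 by auto
    then have "phi T \<le> f n" using A pb E by auto
    then show "max_balanced T" using phi_lower[of T] E by auto
  }
  {
    assume M: "max_balanced T"
    show "\<forall>T'. is_phylo n T' \<longrightarrow> Phi n T \<le> Phi n T'"
    proof (intro allI impI)
      fix T' assume "is_phylo n T'"
      then show "Phi n T \<le> Phi n T'"
        using Phi_eq phi_lower[of T'] phi_lower[of T] M E by auto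
    qed
  }
qed

end
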